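(* Let $a\in\mathbb{R}\setminus\{0\}$, $B>0$, and set $\kappa=\min\{1/8,\ B/18,\ B/(8|a|),\ |a|/8,\ |a|B/4,\ \sqrt{|a|}/2\}$. Let $D(\varepsilon,s)=-\varepsilon s^2+is+\varepsilon a$. Then there exists $\varepsilon_1>0$ such that $$|D(\varepsilon,s)|\ge \kappa\,\max\{\min\{1,s^2\},|\varepsilon|^2\}$$ for all $s\in\mathbb{R}$ and all $\varepsilon\in\mathbb{C}$ with $|\mathrm{Re}\,\varepsilon|\ge B(\mathrm{Im}\,\varepsilon)^2$ and $0<|\varepsilon|<2\varepsilon_1$. *)

theory Defs
  imports Complex_Main
begin

definition D :: "real \<Rightarrow> complex \<Rightarrow> real \<Rightarrow> complex" where
  "D a \<epsilon> s = - \<epsilon> * (complex_of_real s)^2 + \<i> * complex_of_real s + \<epsilon> * complex_of_real a"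

definition kappa :: "real \<Rightarrow> real \<Rightarrow> real" where
  "kappa a B = Min {1/8, B/18, B/(8*\<bar>a\<bar>), \<bar>a\<bar>/8, \<bar>a\<bar>*B/4, sqrt \<bar>a\<bar>/2}"

end

theory Submission
  imports Defs
begin

lemma part1:
  fixes x y s a B k :: real
  assumes "\<bar>s\<bar> \<le> 1" "\<bar>x\<bar> \<ge> B * y^2" "B > 0" "k \<ge> 0" "k \<le> 1/8" "k \<le> B/18" "k*\<bar>a\<bar> \<le> B/8"
  shows "k * s^2 \<le> max \<bar>x*(a-s^2)\<bar> \<bar>y*(a-s^2)+s\<bar>"
proof -
  define t where "t = a - s^2"
  have ss: "s^2 \<le> \<bar>s\<bar>" using assms(1)
    by (metis abs_ge_zero abs_mult_self_eq mult_left_le power2_eq_square)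
  show ?thesis
  proof (cases "\<bar>y*t\<bar> \<le> \<bar>s\<bar>/2")
    case True
    have "\<bar>y*t+s\<bar> \<ge> \<bar>s\<bar>/2" using True by linarith
    moreover have "k*s^2 \<le> \<bar>s\<bar>/2"
    proof -
      have "k*s^2 \<le> (1/8)*s^2" using assms(5) by (intro mult_right_mono) auto
      then show ?thesis using ss by linarith
    qed
    ultimately show ?thesis unfolding t_def by linarith
  next
    case False
    hence "\<bar>s\<bar> < 2*\<bar>y*t\<bar>" by linarith
    hence "\<bar>s\<bar>^2 < (2*\<bar>y*t\<bar>)^2" by (intro power_strict_mono) auto
    hence s2: "s^2 < 4*y^2*t^2" by (simp add: power_mult_distrib)
    have tb: "\<bar>t\<bar> \<le> \<bar>a\<bar> + 1" unfolding t_def using ss assms(1) zero_le_power2[of s] by linarith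
    have "4*k*\<bar>t\<bar> \<le> 4*k*(\<bar>a\<bar>+1)" using tb assms(4) by (intro mult_left_mono) auto
    also have "\<dots> \<le> B" using assms by (simp add: algebra_simps)
    finally have kt: "4*k*\<bar>t\<bar> \<le> B" .
    have "k*s^2 \<le> k*(4*y^2*t^2)" using s2 assms(4) by (intro mult_left_mono) auto
    also have "\<dots> = (4*k*\<bar>t\<bar>)*(y^2*\<bar>t\<bar>)" by (simp add: power2_eq_square abs_mult_self_eq algebra_simps)
    also have "\<dots> \<le> B*(y^2*\<bar>t\<bar>)" using kt by (intro mult_right_mono) auto
    also have "\<dots> = (B*y^2)*\<bar>t\<bar>" by simp
    also have "\<dots> \<le> \<bar>x\<bar>*\<bar>t\<bar>" using assms(2) by (intro mult_right_mono) auto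
    also have "\<dots> = \<bar>x*t\<bar>" by (simp add: abs_mult)
    finally show ?thesis unfolding t_def by linarith
  qed
qed

lemma part2:
  fixes x y s a B k :: real
  assumes "\<bar>s\<bar> > 1" "\<bar>x\<bar> \<ge> B * y^2" "B > 0" "k \<ge> 0" "k \<le> 1/8" "k \<le> B/18" "k*\<bar>a\<bar> \<le> B/8"
  shows "k \<le> max \<bar>x*(a-s^2)\<bar> \<bar>y*(a-s^2)+s\<bar>"
proof -
  define t where "t = a - s^2"
  show ?thesis
  proof (cases "\<bar>y*t+s\<bar> \<ge> k")
    case True then show ?thesis unfolding t_def by linarith
  next
    case False
    hence yt: "\<bar>y*t\<bar> \<ge> 7/8*\<bar>s\<bar>" using assms(1,5) by linarith
    hence "(7/8*\<bar>s\<bar>)^2 \<le> \<bar>y*t\<bar>^2" by (intro power_mono) auto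
    moreover have "(7/8*\<bar>s\<bar>)^2 = 49/64*s^2" by (simp add: power2_eq_square abs_mult_self_eq)
    ultimately have y2t2: "49/64*s^2 \<le> y^2*t^2" by (simp add: power_mult_distrib)
    have tpos: "\<bar>t\<bar> > 0"
    proof (rule ccontr)
      assume "\<not> \<bar>t\<bar> > 0"
      hence "t = 0" by simp
      thus False using yt assms(1) by simp
    qed
    have s21: "s^2 \<ge> 1" using assms(1)
    proof -
      have "1 \<le> \<bar>s\<bar>*\<bar>s\<bar>" using mult_mono[of 1 "\<bar>s\<bar>" 1 "\<bar>s\<bar>"] assms(1) by simp
      then show ?thesis by (simp add: power2_eq_square abs_mult_self_eq)
    qed
    have tb: "\<bar>t\<bar> \<le> s^2*(1+\<bar>a\<bar>)"
    proof -
      have "\<bar>a\<bar> \<le> \<bar>a\<bar>*s^2" using mult_left_mono[of 1 "s^2" "\<bar>a\<bar>"] s21 by simp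
      moreover have "\<bar>a - s^2\<bar> \<le> \<bar>a\<bar> + \<bar>s^2\<bar>" by (rule abs_triangle_ineq4)
      moreover have "\<bar>s^2\<bar> = s^2" by simp
      moreover have "s^2*(1+\<bar>a\<bar>) = s^2 + \<bar>a\<bar>*s^2" by (simp add: algebra_simps)
      ultimately show ?thesis unfolding t_def by linarith
    qed
    have "k*\<bar>t\<bar> \<le> k*(s^2*(1+\<bar>a\<bar>))" using tb assms(4) by (intro mult_left_mono) auto
    also have "\<dots> = s^2*(k + k*\<bar>a\<bar>)" by (simp add: algebra_simps)
    also have "\<dots> \<le> s^2*(49/64*B)" using assms by (intro mult_left_mono) auto
    also have "\<dots> = B*(49/64*s^2)" by simp
    also have "\<dots> \<le> B*(y^2*t^2)" using y2t2 assms(3) by (intro mult_left_mono) auto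
    also have "\<dots> = (B*y^2)*\<bar>t\<bar>*\<bar>t\<bar>" by (simp add: power2_eq_square abs_mult_self_eq algebra_simps)
    also have "\<dots> \<le> \<bar>x\<bar>*\<bar>t\<bar>*\<bar>t\<bar>" using assms(2) by (intro mult_right_mono) auto
    finally have "k*\<bar>t\<bar> \<le> (\<bar>x\<bar>*\<bar>t\<bar>)*\<bar>t\<bar>" .
    hence "k*\<bar>t\<bar> \<le> (\<bar>x\<bar>*\<bar>t\<bar>)*\<bar>t\<bar>" .
    hence "k \<le> \<bar>x\<bar>*\<bar>t\<bar>" using tpos by (rule mult_right_le_imp_le)
    then show ?thesis unfolding t_def by (simp add: abs_mult)
  qed
qed

lemma part3:
  fixes x y s a B k :: real
  assumes "s^2 < x^2+y^2" "x^2+y^2 \<le> \<bar>a\<bar>/2" "\<bar>x\<bar> \<le> 1" "\<bar>x\<bar> \<ge> B * y^2" "B > 0" "k \<ge> 0"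
    "k \<le> \<bar>a\<bar>/8" "k \<le> \<bar>a\<bar>*B/4"
  shows "k * (x^2+y^2) \<le> max \<bar>x*(a-s^2)\<bar> \<bar>y*(a-s^2)+s\<bar>"
proof -
  have ta: "\<bar>a - s^2\<bar> \<ge> \<bar>a\<bar>/2" using assms(1,2) zero_le_power2[of s] by linarith
  have y2: "y^2 \<le> \<bar>x\<bar>/B" using assms(4,5) by (simp add: field_simps)
  have x2: "x^2 \<le> \<bar>x\<bar>" using assms(3)
    by (metis abs_ge_zero abs_mult_self_eq mult_left_le power2_eq_square)
  have "k*(x^2+y^2) \<le> k*(\<bar>x\<bar> + \<bar>x\<bar>/B)" using x2 y2 assms(6) by (intro mult_left_mono) auto
  also have "\<dots> = k*\<bar>x\<bar> + (k/B)*\<bar>x\<bar>" by (simp add: algebra_simps)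
  also have "\<dots> \<le> \<bar>a\<bar>/8*\<bar>x\<bar> + \<bar>a\<bar>/4*\<bar>x\<bar>"
  proof -
    have "k/B \<le> \<bar>a\<bar>/4" using assms(5,8) by (simp add: field_simps)
    then show ?thesis using assms(7) by (intro add_mono mult_right_mono) auto
  qed
  also have "\<dots> \<le> \<bar>x\<bar>*(\<bar>a\<bar>/2)" by (simp add: algebra_simps)
  also have "\<dots> \<le> \<bar>x\<bar>*\<bar>a - s^2\<bar>" using ta by (intro mult_left_mono) auto
  also have "\<dots> = \<bar>x*(a-s^2)\<bar>" by (simp add: abs_mult)
  finally show ?thesis by linarith
qed

lemma D_alt: "D a \<epsilon> s = \<epsilon> * complex_of_real (a - s^2) + \<i> * complex_of_real s"
  unfolding D_def by (simp add: algebra_simps)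

lemma Re_D: "Re (D a \<epsilon> s) = Re \<epsilon> * (a - s^2)" by (simp add: D_alt)
lemma Im_D: "Im (D a \<epsilon> s) = Im \<epsilon> * (a - s^2) + s" by (simp add: D_alt)

lemma kappa_props:
  assumes "a \<noteq> 0" "B > 0"
  shows "kappa a B > 0" "kappa a B \<le> 1/8" "kappa a B \<le> B/18" "kappa a B \<le> B/(8*\<bar>a\<bar>)"
    "kappa a B \<le> \<bar>a\<bar>/8" "kappa a B \<le> \<bar>a\<bar>*B/4"
proof -
  show "kappa a B > 0" using assms unfolding kappa_def by (subst Min_gr_iff) auto
  show "kappa a B \<le> 1/8" unfolding kappa_def by (rule Min_le) auto
  show "kappa a B \<le> B/18" unfolding kappa_def by (rule Min_le) auto
  show "kappa a B \<le> B/(8*\<bar>a\<bar>)" unfolding kappa_def by (rule Min_le) auto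
  show "kappa a B \<le> \<bar>a\<bar>/8" unfolding kappa_def by (rule Min_le) auto
  show "kappa a B \<le> \<bar>a\<bar>*B/4" unfolding kappa_def by (rule Min_le) auto
qed

theorem lemma3p1:
  fixes a B :: real
  assumes "a \<noteq> 0" and "B > 0"
  shows "\<exists>\<epsilon>1>0. \<forall>s::real. \<forall>\<epsilon>::complex.
           \<bar>Re \<epsilon>\<bar> \<ge> B * (Im \<epsilon>)^2 \<and> 0 < cmod \<epsilon> \<and> cmod \<epsilon> < 2 * \<epsilon>1 \<longrightarrow>
           cmod (D a \<epsilon> s) \<ge> kappa a B * max (min 1 (s^2)) ((cmod \<epsilon>)^2)"
proof -
  define \<delta> where "\<delta> = min 1 (\<bar>a\<bar>/2)"
  have dpos: "\<delta> > 0" using assms(1) unfolding \<delta>_def by auto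
  note kp = kappa_props[OF assms]
  define k where "k = kappa a B"
  have ka: "k*\<bar>a\<bar> \<le> B/8" using kp(4) assms(1) unfolding k_def by (simp add: field_simps)
  show ?thesis
  proof (intro exI[of _ "\<delta>/2"] conjI allI impI)
    show "\<delta>/2 > 0" using dpos by simp
    fix s :: real and \<epsilon> :: complex
    assume h: "\<bar>Re \<epsilon>\<bar> \<ge> B * (Im \<epsilon>)^2 \<and> 0 < cmod \<epsilon> \<and> cmod \<epsilon> < 2 * (\<delta>/2)"
    define x where "x = Re \<epsilon>"
    define y where "y = Im \<epsilon>"
    have hx: "\<bar>x\<bar> \<ge> B*y^2" using h unfolding x_def y_def by simp
    have e2: "(cmod \<epsilon>)^2 = x^2+y^2" unfolding x_def y_def by (simp add: cmod_power2)
    have elt: "cmod \<epsilon> < \<delta>" using h by simp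
    have "(cmod \<epsilon>)^2 \<le> \<delta>^2" using elt by (intro power_mono) auto
    also have "\<delta>^2 \<le> \<delta>"
    proof -
      have "\<delta> \<le> 1" unfolding \<delta>_def by simp
      then show ?thesis using dpos by (simp add: power2_eq_square mult_left_le)
    qed
    finally have ed: "x^2+y^2 \<le> \<delta>" using e2 by simp
    have x1: "\<bar>x\<bar> \<le> 1" using abs_Re_le_cmod[of \<epsilon>] elt unfolding x_def \<delta>_def by linarith
    have M: "max \<bar>x*(a-s^2)\<bar> \<bar>y*(a-s^2)+s\<bar> \<le> cmod (D a \<epsilon> s)"
      using abs_Re_le_cmod[of "D a \<epsilon> s"] abs_Im_le_cmod[of "D a \<epsilon> s"]
      unfolding Re_D Im_D x_def y_def by simp
    have k0: "k \<ge> 0" using kp unfolding k_def by simp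
    have k8: "k \<le> 1/8" and k18: "k \<le> B/18" and ka8: "k \<le> \<bar>a\<bar>/8" and kab: "k \<le> \<bar>a\<bar>*B/4"
      using kp unfolding k_def by simp_all
    have main: "k * max (min 1 (s^2)) (x^2+y^2) \<le> max \<bar>x*(a-s^2)\<bar> \<bar>y*(a-s^2)+s\<bar>"
    proof (cases "x^2+y^2 \<le> min 1 (s^2)")
      case True
      hence mm: "max (min 1 (s^2)) (x^2+y^2) = min 1 (s^2)" by (rule max_absorb1)
      moreover have "k * min 1 (s^2) \<le> max \<bar>x*(a-s^2)\<bar> \<bar>y*(a-s^2)+s\<bar>"
      proof (cases "\<bar>s\<bar> \<le> 1")
        case True
        hence "s^2 \<le> 1" by (simp add: abs_square_le_1)
        then have "min 1 (s^2) = s^2" by (rule min_absorb2)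
        then show ?thesis using part1[OF True hx assms(2) k0 k8 k18 ka] by metis
      next
        case False
        hence "s^2 \<ge> 1" by (metis abs_square_le_1 linorder_le_cases abs_square_eq_1 abs_le_square_iff abs_one)
        hence "min 1 (s^2) = 1" by simp
        moreover have "\<bar>s\<bar> > 1" using False by simp
        ultimately show ?thesis using part2[OF _ hx assms(2) k0 k8 k18 ka] by (metis mult.right_neutral)
      qed
      ultimately show ?thesis by simp
    next
      case False
      have "\<delta> \<le> 1" unfolding \<delta>_def by simp
      hence s2: "s^2 < x^2+y^2" using ed False by (simp add: min_def split: if_splits)
      have "max (min 1 (s^2)) (x^2+y^2) = x^2+y^2" using False by (intro max_absorb2) linarith
      moreover have "k*(x^2+y^2) \<le> max \<bar>x*(a-s^2)\<bar> \<bar>y*(a-s^2)+s\<bar>"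
      proof -
        have "\<delta> \<le> \<bar>a\<bar>/2" unfolding \<delta>_def by simp
        then have "x^2+y^2 \<le> \<bar>a\<bar>/2" using ed by linarith
        then show ?thesis using part3[OF s2 _ x1 hx assms(2) k0 ka8 kab] by blast
      qed
      ultimately show ?thesis by simp
    qed
    show "kappa a B * max (min 1 (s^2)) ((cmod \<epsilon>)^2) \<le> cmod (D a \<epsilon> s)"
      unfolding e2 k_def[symmetric] using main M by (rule order_trans)
  qed
qed

end
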